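(* Let $R$ be a ranking profile over $m$ candidates and let $\rhd$ be a ranking that is rank-priceable for $R$. Then $\rhd$ satisfies unanimous proportional justified representation (uPJR) for $R$, i.e., $u(\succ,\rhd)\geq\lfloor R(\succ)\binom{m}{2}\rfloor$ for all $\succ\in\mathcal{R}$.
   Context: Let $C$ be a set of $m$ candidates. A ranking is a strict linear order over $C$; $\mathcal{R}$ denotes the set of all rankings over $C$. A ranking profile is a function $R:\mathcal{R}\to[0,1]$ with $\sum_{\succ\in\mathcal{R}}R(\succ)=1$. For rankings $\succ,\rhd$, $u(\succ,\rhd)=|\{(x,y)\in C^2: x\succ y \text{ and } x\rhd y\}|$, and for $x\in X\subseteq C$, $u(\succ,x,X)=|\{y\in X\setminus\{x\}: x\succ y\}|$. A ranking $\rhd=x_1,\dots,x_m$ (i.e., $x_1\rhd x_2\rhd\dots\rhd x_m$) is rank-priceable for $R$ if there is $\pi:\mathcal{R}\times C\to\mathbb{R}$ such that (1) $0\leq\pi(\succ,x_i)\leq u(\succ,x_i,\{x_i,\dots,x_m\})$ for all $\succ\in\mathcal{R}$ and all $i$; (2) $\sum_{i=1}^m\pi(\succ,x_i)\leq\binom{m}{2}R(\succ)$ for all $\succ\in\mathcal{R}$; (3) $\sum_{\succ\in\mathcal{R}}\pi(\succ,x_i)\leq m-i$ for all $i\in\{1,\dots,m\}$; (4) $\sum_{\succ\in\mathcal{R}}\sum_{i=1}^m\pi(\succ,x_i)>\binom{m}{2}-1$. *)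

theory Defs
  imports Complex_Main "HOL-Combinatorics.Multiset_Permutations"
begin

text \<open>A ranking over a finite candidate set C is represented as a list
  listing every candidate exactly once, best first.  The set of all rankings
  is the library notion permutations_of_set C.\<close>

definition rankings :: "'a set \<Rightarrow> 'a list set" where
  "rankings C = permutations_of_set C"

definition prefers :: "'a list \<Rightarrow> 'a \<Rightarrow> 'a \<Rightarrow> bool" where
  "prefers r x y \<longleftrightarrow> (\<exists>i j. i < j \<and> j < length r \<and> r ! i = x \<and> r ! j = y)"

definition agree :: "'a list \<Rightarrow> 'a list \<Rightarrow> nat" where
  "agree r t = card {(x, y). prefers r x y \<and> prefers t x y}"

definition u_cand :: "'a list \<Rightarrow> 'a \<Rightarrow> 'a set \<Rightarrow> nat" where
  "u_cand r x X = card {y \<in> X - {x}. prefers r x y}"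

definition ranking_profile :: "'a set \<Rightarrow> ('a list \<Rightarrow> real) \<Rightarrow> bool" where
  "ranking_profile C R \<longleftrightarrow>
     (\<forall>r\<in>rankings C. 0 \<le> R r \<and> R r \<le> 1) \<and> (\<Sum>r\<in>rankings C. R r) = 1"

text \<open>Rank-priceability; with t = x_1,...,x_m we have x_(i+1) = t ! i (0-based).\<close>
definition rank_priceable :: "'a set \<Rightarrow> ('a list \<Rightarrow> real) \<Rightarrow> 'a list \<Rightarrow> bool" where
  "rank_priceable C R t \<longleftrightarrow> t \<in> rankings C \<and>
    (let m = card C in
     \<exists>\<pi> :: 'a list \<Rightarrow> 'a \<Rightarrow> real.
       (\<forall>r\<in>rankings C. \<forall>i<m.
          0 \<le> \<pi> r (t ! i) \<and> \<pi> r (t ! i) \<le> real (u_cand r (t ! i) (set (drop i t)))) \<and>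
       (\<forall>r\<in>rankings C. (\<Sum>i<m. \<pi> r (t ! i)) \<le> real (m choose 2) * R r) \<and>
       (\<forall>i<m. (\<Sum>r\<in>rankings C. \<pi> r (t ! i)) \<le> real m - real (i + 1)) \<and>
       (\<Sum>r\<in>rankings C. \<Sum>i<m. \<pi> r (t ! i)) > real (m choose 2) - 1)"

end

theory Submission
  imports Defs
begin

lemma sum_ucand_le_agree:
  assumes "distinct t"
  shows "(\<Sum>i<length t. u_cand r (t ! i) (set (drop i t))) \<le> agree r t"
proof -
  define S where "S i = {y \<in> set (drop i t) - {t ! i}. prefers r (t ! i) y}" for i
  define U where "U = (\<Union>i<length t. (\<lambda>y. (t ! i, y)) ` S i)"
  have finS: "finite (S i)" for i unfolding S_def by auto
  have cardU: "card U = (\<Sum>i<length t. card ((\<lambda>y. (t ! i, y)) ` S i))"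
    unfolding U_def
  proof (rule card_UN_disjoint)
    show "\<forall>i\<in>{..<length t}. finite ((\<lambda>y. (t ! i, y)) ` S i)" using finS by auto
    show "\<forall>i\<in>{..<length t}. \<forall>j\<in>{..<length t}. i \<noteq> j \<longrightarrow>
      (\<lambda>y. (t ! i, y)) ` S i \<inter> (\<lambda>y. (t ! j, y)) ` S j = {}"
      using assms by (auto simp: nth_eq_iff_index_eq)
  qed simp
  have "(\<Sum>i<length t. card ((\<lambda>y. (t ! i, y)) ` S i)) = (\<Sum>i<length t. card (S i))"
    by (rule sum.cong) (auto simp: card_image inj_on_def)
  hence eq: "(\<Sum>i<length t. u_cand r (t ! i) (set (drop i t))) = card U"
    using cardU unfolding u_cand_def S_def by simp
  have sub: "U \<subseteq> {(x, y). prefers r x y \<and> prefers t x y}"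
  proof
    fix p assume "p \<in> U"
    then obtain i y where i: "i < length t" and p: "p = (t ! i, y)" and y: "y \<in> S i"
      unfolding U_def by auto
    from y have yd: "y \<in> set (drop i t)" and yne: "y \<noteq> t ! i" and pr: "prefers r (t ! i) y"
      unfolding S_def by auto
    from yd obtain k where k: "k < length (drop i t)" "drop i t ! k = y"
      by (auto simp: in_set_conv_nth)
    hence "t ! (i + k) = y" "i + k < length t" by auto
    moreover have "k \<noteq> 0" using yne \<open>t ! (i + k) = y\<close> by (cases k) auto
    ultimately have "prefers t (t ! i) y" unfolding prefers_def
      by (intro exI[of _ i] exI[of _ "i+k"]) auto
    thus "p \<in> {(x, y). prefers r x y \<and> prefers t x y}" using p pr by auto
  qed
  have fin: "finite {(x, y). prefers r x y \<and> prefers t x y}"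
    by (rule finite_subset[of _ "set t \<times> set t"]) (auto simp: prefers_def, metis nth_mem order.strict_trans, metis nth_mem)
  show ?thesis unfolding eq agree_def using card_mono[OF fin sub] .
qed

theorem mainTheorem3:
  fixes C :: "'a set" and R :: "'a list \<Rightarrow> real" and t :: "'a list"
  assumes "finite C"
    and "ranking_profile C R"
    and "rank_priceable C R t"
  shows "\<forall>r\<in>rankings C. \<lfloor>R r * real (card C choose 2)\<rfloor> \<le> int (agree r t)"
proof
  fix r0 assume r0: "r0 \<in> rankings C"
  define m where "m = card C"
  define M where "M = real (m choose 2)"
  define K where "K = rankings C"
  have finK: "finite K" unfolding K_def rankings_def using assms(1) by simp
  have tK: "t \<in> K" and dt: "distinct t" and st: "set t = C"
    using assms(3) unfolding rank_priceable_def K_def rankings_def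
    by (auto simp: permutations_of_set_def)
  have lt: "length t = m" unfolding m_def using dt st distinct_card by fastforce
  obtain \<pi> :: "'a list \<Rightarrow> 'a \<Rightarrow> real" where
    p1: "\<forall>r\<in>K. \<forall>i<m. 0 \<le> \<pi> r (t ! i) \<and> \<pi> r (t ! i) \<le> real (u_cand r (t ! i) (set (drop i t)))"
    and p2: "\<forall>r\<in>K. (\<Sum>i<m. \<pi> r (t ! i)) \<le> M * R r"
    and p4: "(\<Sum>r\<in>K. \<Sum>i<m. \<pi> r (t ! i)) > M - 1"
    using assms(3) unfolding rank_priceable_def Let_def m_def M_def K_def by blast
  define P where "P r = (\<Sum>i<m. \<pi> r (t ! i))" for r
  have sumR: "(\<Sum>r\<in>K. R r) = 1" using assms(2) unfolding ranking_profile_def K_def by simp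
  have r0K: "r0 \<in> K" using r0 K_def by simp
  have "M * R r0 - P r0 \<le> (\<Sum>r\<in>K. M * R r - P r)"
    by (rule member_le_sum[OF r0K]) (use p2 P_def finK in auto)
  also have "\<dots> = M * (\<Sum>r\<in>K. R r) - (\<Sum>r\<in>K. P r)"
    by (simp add: sum_subtractf sum_distrib_left)
  also have "\<dots> < 1" using sumR p4 P_def by simp
  finally have A: "M * R r0 < P r0 + 1" by simp
  have "P r0 \<le> (\<Sum>i<m. real (u_cand r0 (t ! i) (set (drop i t))))"
    unfolding P_def by (rule sum_mono) (use p1 r0K in auto)
  also have "\<dots> = real (\<Sum>i<length t. u_cand r0 (t ! i) (set (drop i t)))" using lt by simp
  also have "\<dots> \<le> real (agree r0 t)" using sum_ucand_le_agree[OF dt, of r0] of_nat_le_iff by blast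
  finally have "R r0 * M < real (agree r0 t) + 1" using A by (simp add: mult.commute)
  hence "\<lfloor>R r0 * M\<rfloor> < int (agree r0 t) + 1" by linarith
  thus "\<lfloor>R r0 * real (card C choose 2)\<rfloor> \<le> int (agree r0 t)" unfolding M_def m_def by simp
qed

end
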